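(* Let $d\ge1$ be an integer, $C>1$ real, and $\rho$ a growth function with $\rho(x)\ge x$ and $\rho(x)\le Cx^d$ for all $x\ge1$. Let $m\ge1$ and $0\le k\le m$ be integers and $\sigma\in\{-1,1\}^m$ with $|\sigma|=k$ and $\operatorname{disc}(\sigma)\ge0$. If $(a,b)=f^\rho_\sigma$, then $$0\le b=2k-m\le k\quad\text{and}\quad 0\le a\le\tau^\rho_{m-k}(k,k)\le(2C)^{(m-k)d^{m-k}}(2k)^{d^{m-k}}.$$
   Context: A growth function is an increasing $\rho:\mathbb{R}\to\mathbb{R}^{\ge0}$. Binary strings are elements of $\{-1,1\}^m$ (the empty string $<>$ for $m=0$); $|\sigma|$ is the number of coordinates equal to $1$; $\operatorname{disc}(\sigma)=\sum_i\sigma_i$; $\sigma\wedge u$ denotes concatenation. $f^\rho_\sigma\in\mathbb{R}^2$ is defined recursively: $f^\rho_{<>}=(0,0)$, and if $f^\rho_\sigma=(a,b)$ then $f^\rho_{\sigma\wedge1}=(a+1,b+1)$ and $f^\rho_{\sigma\wedge-1}=(a+\rho(a+b),b-1)$. The functions $\tau^\rho_i:\mathbb{Z}^2\to\mathbb{R}$ are $\tau^\rho_0(x,y)=x$, $\tau^\rho_{i+1}(x,y)=\tau^\rho_i(x,y)+\rho(\tau^\rho_i(x,y)+y-i)$. *)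

theory Defs
  imports Complex_Main
begin

definition growth_function :: "(real \<Rightarrow> real) \<Rightarrow> bool" where
  "growth_function \<rho> \<longleftrightarrow> mono \<rho> \<and> (\<forall>x. \<rho> x \<ge> 0)"

(* Binary strings sigma in {-1,1}^m are int lists of length m with entries in {-1,1};
   sigma \<and> u (concatenation) is  sigma @ [u]. *)
definition binary_string :: "int list \<Rightarrow> bool" where
  "binary_string \<sigma> \<longleftrightarrow> set \<sigma> \<subseteq> {-1, 1}"

(* |sigma| = number of coordinates equal to 1 *)
definition ones :: "int list \<Rightarrow> nat" where
  "ones \<sigma> = length (filter (\<lambda>x. x = 1) \<sigma>)"

definition disc :: "int list \<Rightarrow> int" where
  "disc \<sigma> = sum_list \<sigma>"

definition f_step :: "(real \<Rightarrow> real) \<Rightarrow> real \<times> real \<Rightarrow> int \<Rightarrow> real \<times> real" where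
  "f_step \<rho> p u = (if u = 1 then (fst p + 1, snd p + 1)
                   else (fst p + \<rho> (fst p + snd p), snd p - 1))"

definition f_rho :: "(real \<Rightarrow> real) \<Rightarrow> int list \<Rightarrow> real \<times> real" where
  "f_rho \<rho> \<sigma> = foldl (f_step \<rho>) (0, 0) \<sigma>"

lemma f_rho_Nil: "f_rho \<rho> [] = (0, 0)"
  by (simp add: f_rho_def)

lemma f_rho_snoc_1: "f_rho \<rho> (\<sigma> @ [1]) = (fst (f_rho \<rho> \<sigma>) + 1, snd (f_rho \<rho> \<sigma>) + 1)"
  by (simp add: f_rho_def f_step_def)

lemma f_rho_snoc_m1: "f_rho \<rho> (\<sigma> @ [-1]) =
   (fst (f_rho \<rho> \<sigma>) + \<rho> (fst (f_rho \<rho> \<sigma>) + snd (f_rho \<rho> \<sigma>)), snd (f_rho \<rho> \<sigma>) - 1)"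
  by (simp add: f_rho_def f_step_def)

fun tau :: "(real \<Rightarrow> real) \<Rightarrow> nat \<Rightarrow> int \<Rightarrow> int \<Rightarrow> real" where
  "tau \<rho> 0 x y = real_of_int x"
| "tau \<rho> (Suc i) x y = tau \<rho> i x y + \<rho> (tau \<rho> i x y + real_of_int y - real i)"

end

theory Submission
  imports Defs
begin

lemma tau_shift:
  assumes "mono \<rho>"
  shows "tau \<rho> q (int p + 1) (int p + 1) \<ge> tau \<rho> q (int p) (int p) + 1"
proof (induction q)
  case 0 then show ?case by simp
next
  case (Suc q)
  have "\<rho> (tau \<rho> q (int p) (int p) + real_of_int (int p) - real q)
     \<le> \<rho> (tau \<rho> q (int p + 1) (int p + 1) + real_of_int (int p + 1) - real q)"
    using Suc assms by (intro monoD[OF assms]) simp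
  then show ?case using Suc by simp
qed

lemma tau_ge:
  assumes "\<And>x. \<rho> x \<ge> 0"
  shows "tau \<rho> i x y \<ge> of_int x"
proof (induction i)
  case 0 then show ?case by simp
next
  case (Suc i) then show ?case using assms[of "tau \<rho> i x y + real_of_int y - real i"] by simp
qed

lemma main_list:
  assumes "binary_string \<sigma>" and g: "growth_function \<rho>"
  shows "snd (f_rho \<rho> \<sigma>) = real (ones \<sigma>) - real (length \<sigma> - ones \<sigma>)
    \<and> 0 \<le> fst (f_rho \<rho> \<sigma>)
    \<and> fst (f_rho \<rho> \<sigma>) \<le> tau \<rho> (length \<sigma> - ones \<sigma>) (int (ones \<sigma>)) (int (ones \<sigma>))
    \<and> disc \<sigma> = int (ones \<sigma>) - int (length \<sigma> - ones \<sigma>)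
    \<and> ones \<sigma> \<le> length \<sigma>"
  using assms(1)
proof (induction \<sigma> rule: rev_induct)
  case Nil then show ?case by (simp add: f_rho_Nil ones_def disc_def)
next
  case (snoc u s)
  have mono: "mono \<rho>" and pos: "\<And>x. \<rho> x \<ge> 0" using g by (auto simp: growth_function_def)
  have bs: "binary_string s" and u: "u = 1 \<or> u = -1" using snoc.prems by (auto simp: binary_string_def)
  note IH = snoc.IH[OF bs]
  define p where "p = ones s"
  define q where "q = length s - ones s"
  have le: "p \<le> length s" using IH p_def by simp
  from u show ?case
  proof
    assume u1: "u = 1"
    have o: "ones (s @ [u]) = p + 1" using u1 by (simp add: ones_def p_def)
    have "length (s @ [u]) - ones (s @ [u]) = q" using o le q_def p_def by simp
    moreover have "fst (f_rho \<rho> s) + 1 \<le> tau \<rho> q (int (p+1)) (int (p+1))"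
      using IH tau_shift[OF mono, of q p] p_def q_def by (simp add: add.commute)
    ultimately show ?thesis using IH o u1 le p_def q_def
      by (simp add: f_rho_snoc_1 disc_def)
  next
    assume u1: "u = -1"
    have o: "ones (s @ [u]) = p" using u1 by (simp add: ones_def p_def)
    have l: "length (s @ [u]) - ones (s @ [u]) = q + 1" using o le q_def p_def by simp
    let ?a = "fst (f_rho \<rho> s)" let ?T = "tau \<rho> q (int p) (int p)"
    have a: "?a \<le> ?T" "0 \<le> ?a" using IH p_def q_def by auto
    have b: "snd (f_rho \<rho> s) = real p - real q" using IH p_def q_def by simp
    have "\<rho> (?a + snd (f_rho \<rho> s)) \<le> \<rho> (?T + real_of_int (int p) - real q)"
      using a b by (intro monoD[OF mono]) simp
    then have "?a + \<rho> (?a + snd (f_rho \<rho> s)) \<le> tau \<rho> (q+1) (int p) (int p)"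
      using a by simp
    moreover have "0 \<le> ?a + \<rho> (?a + snd (f_rho \<rho> s))" using a pos by (simp add: add_nonneg_nonneg)
    ultimately show ?thesis using IH o l u1 le p_def q_def
      by (simp add: f_rho_snoc_m1 disc_def)
  qed
qed

lemma tau_bound:
  fixes d k :: nat and C :: real
  assumes "d \<ge> 1" "C > 1" "growth_function \<rho>"
    and up: "\<And>x. x \<ge> 1 \<Longrightarrow> \<rho> x \<le> C * x ^ d"
    and "k \<ge> 1"
  shows "i \<le> k \<Longrightarrow> tau \<rho> i (int k) (int k) + real k
          \<le> (2 * C) ^ (i * d ^ i) * (2 * real k) ^ (d ^ i)"
proof (induction i)
  case 0 then show ?case by simp
next
  case (Suc i)
  have pos: "\<And>x. \<rho> x \<ge> 0" using assms(3) by (auto simp: growth_function_def)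
  let ?T = "tau \<rho> i (int k) (int k)"
  define X where "X = ?T + real k"
  define B where "B = (2 * C) ^ (i * d ^ i) * (2 * real k) ^ (d ^ i)"
  have XB: "X \<le> B" using Suc X_def B_def by simp
  have Tk: "?T \<ge> real_of_int (int k)" using tau_ge[where \<rho>=\<rho> and i=i and x="int k" and y="int k", OF pos] by simp
  have Tk: "?T \<ge> real k" using Tk by simp
  define y where "y = ?T + real_of_int (int k) - real i"
  have y1: "1 \<le> y" "y \<le> X" using Tk Suc.prems assms(5) by (auto simp: y_def X_def)
  have X1: "1 \<le> X" using y1 by simp
  have "\<rho> y \<le> C * y ^ d" using up y1 by simp
  also have "\<dots> \<le> C * X ^ d" using y1 assms(2) by (intro mult_left_mono power_mono) auto
  finally have r: "\<rho> y \<le> C * X ^ d" .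
  have "X \<le> X ^ d" using X1 assms(1)
    by (metis One_nat_def power_increasing power_one_right)
  have "tau \<rho> (Suc i) (int k) (int k) + real k = X + \<rho> y" by (simp add: X_def y_def)
  also have "\<dots> \<le> X ^ d + C * X ^ d" using r \<open>X \<le> X ^ d\<close> by simp
  also have "\<dots> \<le> (2 * C) * X ^ d" using assms(2) X1 by (simp add: algebra_simps)
  also have "\<dots> \<le> (2 * C) * B ^ d" using XB X1 assms(2) by (intro mult_left_mono power_mono) auto
  also have "B ^ d = (2 * C) ^ (i * d ^ Suc i) * (2 * real k) ^ (d ^ Suc i)"
    by (simp add: B_def power_mult_distrib power_mult[symmetric] mult.commute mult.left_commute)
  also have "(2 * C) * \<dots> = (2 * C) ^ (1 + i * d ^ Suc i) * (2 * real k) ^ (d ^ Suc i)"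
    by simp
  also have "\<dots> \<le> (2 * C) ^ (Suc i * d ^ Suc i) * (2 * real k) ^ (d ^ Suc i)"
  proof -
    have "1 \<le> d ^ Suc i" using assms(1) by simp
    then have "1 + i * d ^ Suc i \<le> Suc i * d ^ Suc i" by simp
    then show ?thesis using assms(2)
      by (intro mult_right_mono power_increasing) auto
  qed
  finally show ?case .
qed

theorem mainTheorem18:
  fixes d m k :: nat and C :: real and \<rho> :: "real \<Rightarrow> real" and \<sigma> :: "int list"
    and a b :: real
  assumes "d \<ge> 1" and "C > 1"
    and "growth_function \<rho>"
    and "\<And>x. x \<ge> 1 \<Longrightarrow> \<rho> x \<ge> x"
    and "\<And>x. x \<ge> 1 \<Longrightarrow> \<rho> x \<le> C * x ^ d"
    and "m \<ge> 1" and "k \<le> m"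
    and "binary_string \<sigma>" and "length \<sigma> = m"
    and "ones \<sigma> = k" and "disc \<sigma> \<ge> 0"
    and "(a, b) = f_rho \<rho> \<sigma>"
  shows "0 \<le> b \<and> b = 2 * real k - real m \<and> b \<le> real k
       \<and> 0 \<le> a \<and> a \<le> tau \<rho> (m - k) (int k) (int k)
       \<and> tau \<rho> (m - k) (int k) (int k)
           \<le> (2 * C) ^ ((m - k) * d ^ (m - k)) * (2 * real k) ^ (d ^ (m - k))"
proof -
  note L = main_list[OF assms(8,3)]
  have a: "a = fst (f_rho \<rho> \<sigma>)" "b = snd (f_rho \<rho> \<sigma>)" using assms(12) by (metis fst_conv, metis snd_conv)
  have mk: "m - k \<le> k" using L assms(9-11) by simp
  have k1: "k \<ge> 1" using mk assms(6) by simp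
  have "tau \<rho> (m - k) (int k) (int k) + real k
          \<le> (2 * C) ^ ((m - k) * d ^ (m - k)) * (2 * real k) ^ (d ^ (m - k))"
    using tau_bound[OF assms(1,2,3,5) k1 mk] by simp
  then show ?thesis using L a assms(7,9,10) mk by auto
qed

end
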